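(* Let $\mathfrak{C}$ be a verification condition provider. (1) Assume that $\mathrm{trans}^{\preceq}_{\mathrm{dwp}}$ preserves $\mathfrak{C}$ and that $\mathfrak{C}$ yields upper bounds for $\mathrm{dwp}$. Then for all $C,C'\in\mathsf{pGCL}$ and all $f\in\mathbb{E}$: if $\mathrm{vc}^{\mathfrak{C},\mathrm{dwp}}[\![C]\!](f)$ holds and $C'\multimap\mathrm{trans}^{\preceq}_{\mathrm{dwp}}[\![C]\!](f)$, then $$\mathrm{dwp}[\![C]\!](f)\le\mathrm{dwp}[\![C']\!](f)\le\mathrm{dwp}^*[\![C]\!](f).$$ (2) Dually, assume that $\mathrm{trans}^{\succeq}_{\mathrm{awp}}$ preserves $\mathfrak{C}$ and that $\mathfrak{C}$ yields lower bounds for $\mathrm{awp}$. Then for all $C,C'\in\mathsf{pGCL}$ and all $f\in\mathbb{E}$: if $\mathrm{vc}^{\mathfrak{C},\mathrm{awp}}[\![C]\!](f)$ holds and $C'\multimap\mathrm{trans}^{\succeq}_{\mathrm{awp}}[\![C]\!](f)$, then $$\mathrm{awp}[\![C]\!](f)\ge\mathrm{awp}[\![C']\!](f)\ge\mathrm{awp}^*[\![C]\!](f).$$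
   Context: States: fix a countably infinite set of program variables with values in $\mathbb{Q}_{\ge 0}$; a state is a map $\sigma$ from variables to $\mathbb{Q}_{\ge0}$ which is $0$ for all but finitely many variables; $\mathsf{States}$ is the set of states. A predicate is a map $\varphi:\mathsf{States}\to\{\mathsf{true},\mathsf{false}\}$; $\varphi\models\psi$ means every state satisfying $\varphi$ satisfies $\psi$; $\models\varphi$ means $\varphi$ holds in every state; $\varphi\Rightarrow\psi$ is the usual implication. Expectations: $\mathbb{E}$ is the set of maps $\mathsf{States}\to[0,\infty]$, ordered pointwise ($\le$, $\ge$); $+,\cdot$ pointwise with $0\cdot\infty=0$; $\sqcap,\sqcup$ pointwise min/max; $[\varphi]$ Iverson bracket; $(\varphi\to g)(\sigma)=g(\sigma)$ if $\sigma\models\varphi$, else $\infty$; $f[x/E](\sigma)=f(\sigma[x\mapsto E(\sigma)])$. Programs of $\mathsf{pGCL}$: $C ::= \mathtt{skip} \mid x:=E \mid C;C \mid \mathtt{if}\ \varphi_1\to C\ \square\ \varphi_2\to C \mid \{C\}[p]\{C\} \mid \mathtt{while}(\varphi)\{C\}[I]$, where $E:\mathsf{States}\to\mathbb{Q}_{\ge0}$, $p:\mathsf{States}\to[0,1]$, in every guarded choice $\varphi_1\vee\varphi_2$ is valid, and every loop carries an invariant annotation $I\in\mathbb{E}$. Weakest preexpectations for $\mathcal{T}\in\{\mathrm{dwp},\mathrm{awp}\}$: $\mathcal{T}[\![\mathtt{skip}]\!](f)=f$; $\mathcal{T}[\![x:=E]\!](f)=f[x/E]$; $\mathcal{T}[\![C_1;C_2]\!](f)=\mathcal{T}[\![C_1]\!](\mathcal{T}[\![C_2]\!](f))$;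 $\mathrm{dwp}$ of a guarded choice: $(\varphi_1\to\mathrm{dwp}[\![C_1]\!](f))\sqcap(\varphi_2\to\mathrm{dwp}[\![C_2]\!](f))$; $\mathrm{awp}$ of a guarded choice: $[\varphi_1]\cdot\mathrm{awp}[\![C_1]\!](f)\sqcup[\varphi_2]\cdot\mathrm{awp}[\![C_2]\!](f)$; $\mathcal{T}[\![\{C_1\}[p]\{C_2\}]\!](f)=p\cdot\mathcal{T}[\![C_1]\!](f)+(1-p)\cdot\mathcal{T}[\![C_2]\!](f)$; loops: least fixpoint of $g\mapsto[\neg\varphi]\cdot f+[\varphi]\cdot\mathcal{T}[\![C']\!](g)$. The auxiliary transformer $\mathcal{T}^*$ follows the same rules except $\mathcal{T}^*[\![\mathtt{while}(\varphi)\{C'\}[I]]\!](f)=I$. Implementation relation $\multimap$: the smallest partial order on $\mathsf{pGCL}$ closed under: if $C_1'\multimap C_1$, $C_2'\multimap C_2$ then $C_1';C_2'\multimap C_1;C_2$ and $\{C_1'\}[p]\{C_2'\}\multimap\{C_1\}[p]\{C_2\}$; if moreover $\varphi_1'\models\varphi_1$, $\varphi_2'\models\varphi_2$, $\models\varphi_1'\vee\varphi_2'$ then $\mathtt{if}\ \varphi_1'\to C_1'\ \square\ \varphi_2'\to C_2'\multimap\mathtt{if}\ \varphi_1\to C_1\ \square\ \varphi_2\to C_2$; if $C'\multimap C$ then $\mathtt{while}(\varphi)\{C'\}\multimap\mathtt{while}(\varphi)\{C\}$. Verification conditions: a verification condition provider is a map $\mathfrak{C}$ assigning to each annotated loop $\mathtt{while}(\varphi)\{C'\}[I]$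 and each $f\in\mathbb{E}$ a truth value. For $\mathcal{T}\in\{\mathrm{dwp},\mathrm{awp}\}$, $\mathrm{vc}^{\mathfrak{C},\mathcal{T}}[\![C]\!](f)\in\{\mathsf{true},\mathsf{false}\}$ is defined inductively: $\mathsf{true}$ for $\mathtt{skip}$ and assignments; $\mathrm{vc}[\![C_1]\!](\mathcal{T}^*[\![C_2]\!](f))\wedge\mathrm{vc}[\![C_2]\!](f)$ for $C_1;C_2$; $\mathrm{vc}[\![C_1]\!](f)\wedge\mathrm{vc}[\![C_2]\!](f)$ for guarded and probabilistic choices; $\mathfrak{C}(\mathtt{while}(\varphi)\{C'\}[I],f)\wedge\mathrm{vc}[\![C']\!](I)$ for loops. $\mathfrak{C}$ yields upper (resp. lower) bounds for $\mathcal{T}$ if for all $C\in\mathsf{pGCL}$ and $f\in\mathbb{E}$, $\mathrm{vc}^{\mathfrak{C},\mathcal{T}}[\![C]\!](f)$ implies $\mathcal{T}[\![C]\!](f)\le\mathcal{T}^*[\![C]\!](f)$ (resp. $\ge$). Comparison predicates: $f\preceq g$ true at $\sigma$ iff $f(\sigma)\le g(\sigma)$; $f\succeq g$ true at $\sigma$ iff $f(\sigma)\ge g(\sigma)$. Transformer $\mathrm{trans}^{\bowtie}_{\mathcal{T}}$ ($\bowtie\in\{\preceq,\succeq\}$), by induction: $\mathtt{skip}$ and assignments unchanged; $C_1;C_2\mapsto \mathrm{trans}^{\bowtie}_{\mathcal{T}}[\![C_1]\!](\mathcal{T}^*[\![C_2]\!](f));\mathrm{trans}^{\bowtie}_{\mathcal{T}}[\![C_2]\!](f)$;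 $\mathtt{if}\ \varphi_1\to C_1\ \square\ \varphi_2\to C_2\mapsto \mathtt{if}\ \psi_1\to\mathrm{trans}^{\bowtie}_{\mathcal{T}}[\![C_1]\!](f)\ \square\ \psi_2\to\mathrm{trans}^{\bowtie}_{\mathcal{T}}[\![C_2]\!](f)$ with $\psi_1=\varphi_1\wedge(\varphi_2\Rightarrow \mathcal{T}^*[\![C_1]\!](f)\bowtie\mathcal{T}^*[\![C_2]\!](f))$, $\psi_2=\varphi_2\wedge(\varphi_1\Rightarrow \mathcal{T}^*[\![C_2]\!](f)\bowtie\mathcal{T}^*[\![C_1]\!](f))$; $\{C_1\}[p]\{C_2\}\mapsto\{\mathrm{trans}^{\bowtie}_{\mathcal{T}}[\![C_1]\!](f)\}[p]\{\mathrm{trans}^{\bowtie}_{\mathcal{T}}[\![C_2]\!](f)\}$; $\mathtt{while}(\varphi)\{C'\}[I]\mapsto\mathtt{while}(\varphi)\{\mathrm{trans}^{\bowtie}_{\mathcal{T}}[\![C']\!](I)\}[I]$. Preservation: $\mathrm{trans}^{\preceq}_{\mathrm{dwp}}$ preserves $\mathfrak{C}$ if for all $C,C'\in\mathsf{pGCL}$, $f\in\mathbb{E}$: $\mathrm{vc}^{\mathfrak{C},\mathrm{dwp}}[\![C]\!](f)$ and $C'\multimap\mathrm{trans}^{\preceq}_{\mathrm{dwp}}[\![C]\!](f)$ imply $\mathrm{vc}^{\mathfrak{C},\mathrm{dwp}}[\![C']\!](f)$; analogously $\mathrm{trans}^{\succeq}_{\mathrm{awp}}$ preserves $\mathfrak{C}$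 with $\mathrm{awp}$ in place of $\mathrm{dwp}$. *)

theory Defs
  imports Main "HOL-Library.Extended_Nonnegative_Real"
begin

typedef state = "{\<sigma> :: nat \<Rightarrow> rat. (\<forall>x. 0 \<le> \<sigma> x) \<and> finite {x. \<sigma> x \<noteq> 0}}"
  by (rule exI[of _ "\<lambda>_. 0"]) simp

type_synonym pred = "state \<Rightarrow> bool"
type_synonym expect = "state \<Rightarrow> ennreal"
type_synonym arith = "state \<Rightarrow> rat"   \<comment> \<open>expressions E; well-formedness demands E \<ge> 0\<close>

definition entails :: "pred \<Rightarrow> pred \<Rightarrow> bool" where
  "entails \<phi> \<psi> \<longleftrightarrow> (\<forall>\<sigma>. \<phi> \<sigma> \<longrightarrow> \<psi> \<sigma>)"

definition valid :: "pred \<Rightarrow> bool" where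
  "valid \<phi> \<longleftrightarrow> (\<forall>\<sigma>. \<phi> \<sigma>)"

definition iver :: "pred \<Rightarrow> expect" where
  "iver \<phi> = (\<lambda>\<sigma>. if \<phi> \<sigma> then 1 else 0)"

definition guard_to :: "pred \<Rightarrow> expect \<Rightarrow> expect" where
  "guard_to \<phi> g = (\<lambda>\<sigma>. if \<phi> \<sigma> then g \<sigma> else \<infinity>)"

definition state_upd :: "state \<Rightarrow> nat \<Rightarrow> rat \<Rightarrow> state" where
  "state_upd \<sigma> x v = Abs_state ((Rep_state \<sigma>)(x := v))"

definition subst :: "expect \<Rightarrow> nat \<Rightarrow> arith \<Rightarrow> expect" where
  "subst f x E = (\<lambda>\<sigma>. f (state_upd \<sigma> x (E \<sigma>)))"

datatype prog =
    Skip
  | Assign nat arith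
  | Seq prog prog
  | IfG pred prog pred prog          \<comment> \<open>if \<phi>1 \<rightarrow> C1 \<box> \<phi>2 \<rightarrow> C2\<close>
  | PChoice prog "state \<Rightarrow> real" prog \<comment> \<open>{C1}[p]{C2}\<close>
  | While pred prog expect           \<comment> \<open>while(\<phi>){C}[I]\<close>

fun wf :: "prog \<Rightarrow> bool" where
  "wf Skip = True"
| "wf (Assign x E) = (\<forall>\<sigma>. 0 \<le> E \<sigma>)"
| "wf (Seq C1 C2) = (wf C1 \<and> wf C2)"
| "wf (IfG \<phi>1 C1 \<phi>2 C2) = (valid (\<lambda>\<sigma>. \<phi>1 \<sigma> \<or> \<phi>2 \<sigma>) \<and> wf C1 \<and> wf C2)"
| "wf (PChoice C1 p C2) = ((\<forall>\<sigma>. 0 \<le> p \<sigma> \<and> p \<sigma> \<le> 1) \<and> wf C1 \<and> wf C2)"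
| "wf (While \<phi> C I) = wf C"

definition pGCL :: "prog set" where
  "pGCL = {C. wf C}"

datatype transformer = DWP | AWP

fun wp :: "transformer \<Rightarrow> prog \<Rightarrow> expect \<Rightarrow> expect" where
  "wp T Skip f = f"
| "wp T (Assign x E) f = subst f x E"
| "wp T (Seq C1 C2) f = wp T C1 (wp T C2 f)"
| "wp T (IfG \<phi>1 C1 \<phi>2 C2) f =
     (case T of
        DWP \<Rightarrow> (\<lambda>\<sigma>. min (guard_to \<phi>1 (wp T C1 f) \<sigma>) (guard_to \<phi>2 (wp T C2 f) \<sigma>))
      | AWP \<Rightarrow> (\<lambda>\<sigma>. max (iver \<phi>1 \<sigma> * wp T C1 f \<sigma>) (iver \<phi>2 \<sigma> * wp T C2 f \<sigma>)))"
| "wp T (PChoice C1 p C2) f =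
     (\<lambda>\<sigma>. ennreal (p \<sigma>) * wp T C1 f \<sigma> + ennreal (1 - p \<sigma>) * wp T C2 f \<sigma>)"
| "wp T (While \<phi> C I) f =
     lfp (\<lambda>g. \<lambda>\<sigma>. iver (\<lambda>\<tau>. \<not> \<phi> \<tau>) \<sigma> * f \<sigma> + iver \<phi> \<sigma> * wp T C g \<sigma>)"

fun wp_star :: "transformer \<Rightarrow> prog \<Rightarrow> expect \<Rightarrow> expect" where
  "wp_star T Skip f = f"
| "wp_star T (Assign x E) f = subst f x E"
| "wp_star T (Seq C1 C2) f = wp_star T C1 (wp_star T C2 f)"
| "wp_star T (IfG \<phi>1 C1 \<phi>2 C2) f =
     (case T of
        DWP \<Rightarrow> (\<lambda>\<sigma>. min (guard_to \<phi>1 (wp_star T C1 f) \<sigma>) (guard_to \<phi>2 (wp_star T C2 f) \<sigma>))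
      | AWP \<Rightarrow> (\<lambda>\<sigma>. max (iver \<phi>1 \<sigma> * wp_star T C1 f \<sigma>) (iver \<phi>2 \<sigma> * wp_star T C2 f \<sigma>)))"
| "wp_star T (PChoice C1 p C2) f =
     (\<lambda>\<sigma>. ennreal (p \<sigma>) * wp_star T C1 f \<sigma> + ennreal (1 - p \<sigma>) * wp_star T C2 f \<sigma>)"
| "wp_star T (While \<phi> C I) f = I"

abbreviation dwp where "dwp \<equiv> wp DWP"
abbreviation awp where "awp \<equiv> wp AWP"
abbreviation dwp_star where "dwp_star \<equiv> wp_star DWP"
abbreviation awp_star where "awp_star \<equiv> wp_star AWP"

inductive impl :: "prog \<Rightarrow> prog \<Rightarrow> bool" where
  impl_refl: "wf C \<Longrightarrow> impl C C"
| impl_trans: "impl C1 C2 \<Longrightarrow> impl C2 C3 \<Longrightarrow> impl C1 C3"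
| impl_seq: "impl C1' C1 \<Longrightarrow> impl C2' C2 \<Longrightarrow> impl (Seq C1' C2') (Seq C1 C2)"
| impl_pchoice: "impl C1' C1 \<Longrightarrow> impl C2' C2 \<Longrightarrow> impl (PChoice C1' p C2') (PChoice C1 p C2)"
| impl_if: "impl C1' C1 \<Longrightarrow> impl C2' C2 \<Longrightarrow> entails \<phi>1' \<phi>1 \<Longrightarrow> entails \<phi>2' \<phi>2 \<Longrightarrow>
            valid (\<lambda>\<sigma>. \<phi>1' \<sigma> \<or> \<phi>2' \<sigma>) \<Longrightarrow> impl (IfG \<phi>1' C1' \<phi>2' C2') (IfG \<phi>1 C1 \<phi>2 C2)"
| impl_while: "impl C' C \<Longrightarrow> impl (While \<phi> C' I) (While \<phi> C I)"

type_synonym vcp = "prog \<Rightarrow> expect \<Rightarrow> bool"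
  \<comment> \<open>only ever applied to annotated loops\<close>

fun vc :: "vcp \<Rightarrow> transformer \<Rightarrow> prog \<Rightarrow> expect \<Rightarrow> bool" where
  "vc \<CC> T Skip f = True"
| "vc \<CC> T (Assign x E) f = True"
| "vc \<CC> T (Seq C1 C2) f = (vc \<CC> T C1 (wp_star T C2 f) \<and> vc \<CC> T C2 f)"
| "vc \<CC> T (IfG \<phi>1 C1 \<phi>2 C2) f = (vc \<CC> T C1 f \<and> vc \<CC> T C2 f)"
| "vc \<CC> T (PChoice C1 p C2) f = (vc \<CC> T C1 f \<and> vc \<CC> T C2 f)"
| "vc \<CC> T (While \<phi> C I) f = (\<CC> (While \<phi> C I) f \<and> vc \<CC> T C I)"

definition yields_upper :: "vcp \<Rightarrow> transformer \<Rightarrow> bool" where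
  "yields_upper \<CC> T \<longleftrightarrow> (\<forall>C\<in>pGCL. \<forall>f. vc \<CC> T C f \<longrightarrow> wp T C f \<le> wp_star T C f)"

definition yields_lower :: "vcp \<Rightarrow> transformer \<Rightarrow> bool" where
  "yields_lower \<CC> T \<longleftrightarrow> (\<forall>C\<in>pGCL. \<forall>f. vc \<CC> T C f \<longrightarrow> wp T C f \<ge> wp_star T C f)"

text \<open>The comparison \<bowtie> is a relation on ennreal: (\<le>) for \<preceq>, (\<ge>) for \<succeq>.\<close>
fun transf :: "(ennreal \<Rightarrow> ennreal \<Rightarrow> bool) \<Rightarrow> transformer \<Rightarrow> prog \<Rightarrow> expect \<Rightarrow> prog" where
  "transf R T Skip f = Skip"
| "transf R T (Assign x E) f = Assign x E"
| "transf R T (Seq C1 C2) f = Seq (transf R T C1 (wp_star T C2 f)) (transf R T C2 f)"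
| "transf R T (IfG \<phi>1 C1 \<phi>2 C2) f =
     IfG (\<lambda>\<sigma>. \<phi>1 \<sigma> \<and> (\<phi>2 \<sigma> \<longrightarrow> R (wp_star T C1 f \<sigma>) (wp_star T C2 f \<sigma>))) (transf R T C1 f)
         (\<lambda>\<sigma>. \<phi>2 \<sigma> \<and> (\<phi>1 \<sigma> \<longrightarrow> R (wp_star T C2 f \<sigma>) (wp_star T C1 f \<sigma>))) (transf R T C2 f)"
| "transf R T (PChoice C1 p C2) f = PChoice (transf R T C1 f) p (transf R T C2 f)"
| "transf R T (While \<phi> C I) f = While \<phi> (transf R T C I) I"

abbreviation trans_dwp_le where "trans_dwp_le \<equiv> transf (\<le>) DWP"
abbreviation trans_awp_ge where "trans_awp_ge \<equiv> transf (\<ge>) AWP"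

definition preserves :: "(ennreal \<Rightarrow> ennreal \<Rightarrow> bool) \<Rightarrow> transformer \<Rightarrow> vcp \<Rightarrow> bool" where
  "preserves R T \<CC> \<longleftrightarrow>
     (\<forall>C\<in>pGCL. \<forall>C'\<in>pGCL. \<forall>f. vc \<CC> T C f \<and> impl C' (transf R T C f) \<longrightarrow> vc \<CC> T C' f)"

end

theory Submission
  imports Defs
begin

fun S :: "prog \<Rightarrow> prog \<Rightarrow> bool" where
  "S Skip Skip = True"
| "S (Assign x E) (Assign y F) = (x = y \<and> E = F)"
| "S (Seq a1 a2) (Seq b1 b2) = (S a1 b1 \<and> S a2 b2)"
| "S (IfG p1 a1 p2 a2) (IfG q1 b1 q2 b2) =
     (entails p1 q1 \<and> entails p2 q2 \<and> valid (\<lambda>\<sigma>. p1 \<sigma> \<or> p2 \<sigma>) \<and> S a1 b1 \<and> S a2 b2)"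
| "S (PChoice a1 p a2) (PChoice b1 q b2) = (p = q \<and> S a1 b1 \<and> S a2 b2)"
| "S (While \<phi> a I) (While \<psi> b J) = (\<phi> = \<psi> \<and> I = J \<and> S a b)"
| "S _ _ = False"

lemma S_trans: "S A B \<Longrightarrow> S B C \<Longrightarrow> S A C"
proof (induction A arbitrary: B C)
  case (IfG x1 A1 x3 A2)
  then show ?case by (cases B; cases C; auto simp: entails_def)
next
  case (Seq A1 A2) then show ?case by (cases B; cases C; auto)
next
  case (PChoice A1 p A2) then show ?case by (cases B; cases C; auto)
next
  case (While x1 A x3) then show ?case by (cases B; cases C; auto)
next
  case Skip then show ?case by (cases B; cases C; auto)
next
  case (Assign x E) then show ?case by (cases B; cases C; auto)
qed

lemma S_refl: "wf C \<Longrightarrow> S C C"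
  by (induction C) (auto simp: entails_def)

lemma impl_S: "impl A B \<Longrightarrow> S A B"
  by (induction rule: impl.induct) (auto intro: S_refl S_trans)

lemma S_transf:
  assumes tot: "\<And>a b. R a b \<or> R b a"
  shows "wf C \<Longrightarrow> S (transf R T C f) C"
proof (induction C arbitrary: f)
  case (IfG p1 C1 p2 C2)
  then show ?case using tot by (auto simp: entails_def valid_def)
qed auto

lemma dwp_mono: "S A B \<Longrightarrow> f \<le> g \<Longrightarrow> dwp B f \<le> dwp A g"
proof (induction A arbitrary: B f g)
  case Skip then show ?case by (cases B; auto)
next
  case (Assign x E) then show ?case by (cases B; auto simp: subst_def le_fun_def)
next
  case (Seq A1 A2) then show ?case by (cases B; auto)
next
  case (IfG p1 A1 p2 A2)
  then obtain q1 B1 q2 B2 where B: "B = IfG q1 B1 q2 B2" by (cases B; auto)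
  with IfG have h1: "dwp B1 f \<le> dwp A1 g" and h2: "dwp B2 f \<le> dwp A2 g"
    and e1: "entails p1 q1" and e2: "entails p2 q2" by auto
  show ?case unfolding B
  proof (simp, rule le_funI)
    fix \<sigma>
    have a: "guard_to q1 (dwp B1 f) \<sigma> \<le> guard_to p1 (dwp A1 g) \<sigma>"
      using h1 e1 by (auto simp: guard_to_def entails_def le_fun_def)
    have b: "guard_to q2 (dwp B2 f) \<sigma> \<le> guard_to p2 (dwp A2 g) \<sigma>"
      using h2 e2 by (auto simp: guard_to_def entails_def le_fun_def)
    show "min (guard_to q1 (dwp B1 f) \<sigma>) (guard_to q2 (dwp B2 f) \<sigma>)
          \<le> min (guard_to p1 (dwp A1 g) \<sigma>) (guard_to p2 (dwp A2 g) \<sigma>)"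
      using a b by (simp add: min.coboundedI1 min.coboundedI2)
  qed
next
  case (PChoice A1 p A2)
  then obtain B1 B2 where B: "B = PChoice B1 p B2" and s: "S A1 B1" "S A2 B2"
    by (cases B; auto)
  have h1: "dwp B1 f \<le> dwp A1 g" and h2: "dwp B2 f \<le> dwp A2 g"
    using PChoice s by auto
  show ?case unfolding B using h1 h2
    by (auto simp: le_fun_def intro!: add_mono mult_left_mono)
next
  case (While \<phi> A I)
  then obtain B' where B: "B = While \<phi> B' I" and s: "S A B'" by (cases B; auto)
  show ?case unfolding B
  proof (simp, rule lfp_mono)
    fix Z :: expect
    have "dwp B' Z \<le> dwp A Z" using While s by auto
    then show "(\<lambda>\<sigma>. iver (\<lambda>\<tau>. \<not> \<phi> \<tau>) \<sigma> * f \<sigma> + iver \<phi> \<sigma> * dwp B' Z \<sigma>)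
      \<le> (\<lambda>\<sigma>. iver (\<lambda>\<tau>. \<not> \<phi> \<tau>) \<sigma> * g \<sigma> + iver \<phi> \<sigma> * dwp A Z \<sigma>)"
      using While.prems by (auto simp: le_fun_def intro!: add_mono mult_left_mono)
  qed
qed

lemma awp_mono: "S A B \<Longrightarrow> f \<le> g \<Longrightarrow> awp A f \<le> awp B g"
proof (induction A arbitrary: B f g)
  case Skip then show ?case by (cases B; auto)
next
  case (Assign x E) then show ?case by (cases B; auto simp: subst_def le_fun_def)
next
  case (Seq A1 A2) then show ?case by (cases B; auto)
next
  case (IfG p1 A1 p2 A2)
  then obtain q1 B1 q2 B2 where B: "B = IfG q1 B1 q2 B2" by (cases B; auto)
  with IfG have h1: "awp A1 f \<le> awp B1 g" and h2: "awp A2 f \<le> awp B2 g"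
    and e1: "entails p1 q1" and e2: "entails p2 q2" by auto
  show ?case unfolding B
  proof (simp, rule le_funI)
    fix \<sigma>
    have a: "iver p1 \<sigma> * awp A1 f \<sigma> \<le> iver q1 \<sigma> * awp B1 g \<sigma>"
      using h1 e1 by (auto simp: iver_def entails_def le_fun_def)
    have b: "iver p2 \<sigma> * awp A2 f \<sigma> \<le> iver q2 \<sigma> * awp B2 g \<sigma>"
      using h2 e2 by (auto simp: iver_def entails_def le_fun_def)
    show "max (iver p1 \<sigma> * awp A1 f \<sigma>) (iver p2 \<sigma> * awp A2 f \<sigma>)
          \<le> max (iver q1 \<sigma> * awp B1 g \<sigma>) (iver q2 \<sigma> * awp B2 g \<sigma>)"
      using a b by (simp add: max.coboundedI1 max.coboundedI2)
  qed
next
  case (PChoice A1 p A2)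
  then obtain B1 B2 where B: "B = PChoice B1 p B2" and s: "S A1 B1" "S A2 B2"
    by (cases B; auto)
  have h1: "awp A1 f \<le> awp B1 g" and h2: "awp A2 f \<le> awp B2 g"
    using PChoice s by auto
  show ?case unfolding B using h1 h2
    by (auto simp: le_fun_def intro!: add_mono mult_left_mono)
next
  case (While \<phi> A I)
  then obtain B' where B: "B = While \<phi> B' I" and s: "S A B'" by (cases B; auto)
  show ?case unfolding B
  proof (simp, rule lfp_mono)
    fix Z :: expect
    have "awp A Z \<le> awp B' Z" using While s by auto
    then show "(\<lambda>\<sigma>. iver (\<lambda>\<tau>. \<not> \<phi> \<tau>) \<sigma> * f \<sigma> + iver \<phi> \<sigma> * awp A Z \<sigma>)
      \<le> (\<lambda>\<sigma>. iver (\<lambda>\<tau>. \<not> \<phi> \<tau>) \<sigma> * g \<sigma> + iver \<phi> \<sigma> * awp B' Z \<sigma>)"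
      using While.prems by (auto simp: le_fun_def intro!: add_mono mult_left_mono)
  qed
qed

lemma dwp_star_eq: "S C' (trans_dwp_le C f) \<Longrightarrow> dwp_star C' f = dwp_star C f"
proof (induction C arbitrary: C' f)
  case Skip then show ?case by (cases C'; auto)
next
  case (Assign x E) then show ?case by (cases C'; auto)
next
  case (Seq C1 C2) then show ?case by (cases C'; auto)
next
  case (PChoice C1 p C2) then show ?case by (cases C'; auto)
next
  case (While \<phi> C I) then show ?case by (cases C'; auto)
next
  case (IfG p1 C1 p2 C2)
  then obtain q1 A1 q2 A2 where C': "C' = IfG q1 A1 q2 A2" by (cases C'; auto)
  with IfG have h1: "dwp_star A1 f = dwp_star C1 f" and h2: "dwp_star A2 f = dwp_star C2 f"
    and e: "entails q1 (\<lambda>\<sigma>. p1 \<sigma> \<and> (p2 \<sigma> \<longrightarrow> dwp_star C1 f \<sigma> \<le> dwp_star C2 f \<sigma>))"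
       "entails q2 (\<lambda>\<sigma>. p2 \<sigma> \<and> (p1 \<sigma> \<longrightarrow> dwp_star C2 f \<sigma> \<le> dwp_star C1 f \<sigma>))"
       "valid (\<lambda>\<sigma>. q1 \<sigma> \<or> q2 \<sigma>)" by auto
  show ?case unfolding C'
  proof (simp add: h1 h2, rule ext)
    fix \<sigma>
    show "min (guard_to q1 (dwp_star C1 f) \<sigma>) (guard_to q2 (dwp_star C2 f) \<sigma>) =
          min (guard_to p1 (dwp_star C1 f) \<sigma>) (guard_to p2 (dwp_star C2 f) \<sigma>)"
      using e(1)[unfolded entails_def, rule_format, of \<sigma>] e(2)[unfolded entails_def, rule_format, of \<sigma>]
        e(3)[unfolded valid_def, rule_format, of \<sigma>] unfolding guard_to_def
      by (cases "q1 \<sigma>"; cases "q2 \<sigma>"; cases "p1 \<sigma>"; cases "p2 \<sigma>"; auto simp: min_def top_unique)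
  qed
qed

lemma awp_star_eq: "S C' (trans_awp_ge C f) \<Longrightarrow> awp_star C' f = awp_star C f"
proof (induction C arbitrary: C' f)
  case Skip then show ?case by (cases C'; auto)
next
  case (Assign x E) then show ?case by (cases C'; auto)
next
  case (Seq C1 C2) then show ?case by (cases C'; auto)
next
  case (PChoice C1 p C2) then show ?case by (cases C'; auto)
next
  case (While \<phi> C I) then show ?case by (cases C'; auto)
next
  case (IfG p1 C1 p2 C2)
  then obtain q1 A1 q2 A2 where C': "C' = IfG q1 A1 q2 A2" by (cases C'; auto)
  with IfG have h1: "awp_star A1 f = awp_star C1 f" and h2: "awp_star A2 f = awp_star C2 f"
    and e: "entails q1 (\<lambda>\<sigma>. p1 \<sigma> \<and> (p2 \<sigma> \<longrightarrow> awp_star C1 f \<sigma> \<ge> awp_star C2 f \<sigma>))"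
       "entails q2 (\<lambda>\<sigma>. p2 \<sigma> \<and> (p1 \<sigma> \<longrightarrow> awp_star C2 f \<sigma> \<ge> awp_star C1 f \<sigma>))"
       "valid (\<lambda>\<sigma>. q1 \<sigma> \<or> q2 \<sigma>)" by auto
  show ?case unfolding C'
  proof (simp add: h1 h2, rule ext)
    fix \<sigma>
    show "max (iver q1 \<sigma> * awp_star C1 f \<sigma>) (iver q2 \<sigma> * awp_star C2 f \<sigma>) =
          max (iver p1 \<sigma> * awp_star C1 f \<sigma>) (iver p2 \<sigma> * awp_star C2 f \<sigma>)"
      using e(1)[unfolded entails_def, rule_format, of \<sigma>] e(2)[unfolded entails_def, rule_format, of \<sigma>]
        e(3)[unfolded valid_def, rule_format, of \<sigma>] unfolding iver_def
      by (cases "q1 \<sigma>"; cases "q2 \<sigma>"; cases "p1 \<sigma>"; cases "p2 \<sigma>"; auto simp: max_def)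
  qed
qed

theorem theorem6p5:
  fixes \<CC> :: vcp
  shows
   "(preserves (\<le>) DWP \<CC> \<and> yields_upper \<CC> DWP \<longrightarrow>
      (\<forall>C\<in>pGCL. \<forall>C'\<in>pGCL. \<forall>f.
         vc \<CC> DWP C f \<and> impl C' (trans_dwp_le C f) \<longrightarrow>
         dwp C f \<le> dwp C' f \<and> dwp C' f \<le> dwp_star C f))
  \<and> (preserves (\<ge>) AWP \<CC> \<and> yields_lower \<CC> AWP \<longrightarrow>
      (\<forall>C\<in>pGCL. \<forall>C'\<in>pGCL. \<forall>f.
         vc \<CC> AWP C f \<and> impl C' (trans_awp_ge C f) \<longrightarrow>
         awp C f \<ge> awp C' f \<and> awp C' f \<ge> awp_star C f))"
proof (intro conjI impI ballI allI)
  fix C C' f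
  assume H: "preserves (\<le>) DWP \<CC> \<and> yields_upper \<CC> DWP" and C: "C \<in> pGCL" and C': "C' \<in> pGCL"
    and V: "vc \<CC> DWP C f \<and> impl C' (trans_dwp_le C f)"
  have wfC: "wf C" using C by (simp add: pGCL_def)
  have s1: "S C' (trans_dwp_le C f)" using V impl_S by blast
  have s2: "S (trans_dwp_le C f) C" using S_transf[of "(\<le>)"] wfC by (metis nle_le)
  have "dwp C f \<le> dwp (trans_dwp_le C f) f" using dwp_mono[OF s2] by simp
  also have "\<dots> \<le> dwp C' f" using dwp_mono[OF s1] by simp
  finally show "dwp C f \<le> dwp C' f" .
  have "vc \<CC> DWP C' f" using H V C C' unfolding preserves_def by blast
  then have "dwp C' f \<le> dwp_star C' f" using H C' unfolding yields_upper_def by blast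
  then show "dwp C' f \<le> dwp_star C f" using dwp_star_eq[OF s1] by simp
next
  fix C C' f
  assume H: "preserves (\<ge>) AWP \<CC> \<and> yields_lower \<CC> AWP" and C: "C \<in> pGCL" and C': "C' \<in> pGCL"
    and V: "vc \<CC> AWP C f \<and> impl C' (trans_awp_ge C f)"
  have wfC: "wf C" using C by (simp add: pGCL_def)
  have s1: "S C' (trans_awp_ge C f)" using V impl_S by blast
  have s2: "S (trans_awp_ge C f) C" using S_transf[of "(\<ge>)"] wfC by (metis nle_le)
  have "awp C' f \<le> awp (trans_awp_ge C f) f" using awp_mono[OF s1] by simp
  also have "\<dots> \<le> awp C f" using awp_mono[OF s2] by simp
  finally show "awp C' f \<le> awp C f" .
  have "vc \<CC> AWP C' f" using H V C C' unfolding preserves_def by blast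
  then have "awp C' f \<ge> awp_star C' f" using H C' unfolding yields_lower_def by blast
  then show "awp C' f \<ge> awp_star C f" using awp_star_eq[OF s1] by simp
qed

end
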